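(* There exist binary Euclidean LCD codes with parameters $[30,11,9]$, $[30,15,7]$ and $[33,11,11]$.
   Context: A binary $[n,k,d]$ code is a $k$-dimensional subspace $C\subseteq\mathbb{F}_2^n$ with minimum nonzero Hamming weight $d$; it is Euclidean LCD if $C\cap C^{\perp_E}=\{0\}$, where $C^{\perp_E}$ is the dual with respect to $\langle x,y\rangle_E=\sum x_iy_i$. *)

theory Defs
  imports Main "HOL-Library.Z2"
begin

definition F2vecs :: "nat \<Rightarrow> bit list set" where
  "F2vecs n = {x. length x = n}"

definition vadd :: "bit list \<Rightarrow> bit list \<Rightarrow> bit list" where
  "vadd x y = map2 (+) x y"

definition vzero :: "nat \<Rightarrow> bit list" where
  "vzero n = replicate n 0"

definition hamming_weight :: "bit list \<Rightarrow> nat" where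
  "hamming_weight x = length (filter (\<lambda>a. a \<noteq> 0) x)"

definition inner_E :: "bit list \<Rightarrow> bit list \<Rightarrow> bit" where
  "inner_E x y = (\<Sum>i<length x. x ! i * y ! i)"

text \<open>A binary linear code of length n: a subspace of F_2^n. Over F_2, closure under
  addition together with containing 0 is exactly closure under linear combinations.\<close>
definition binary_linear_code :: "nat \<Rightarrow> bit list set \<Rightarrow> bool" where
  "binary_linear_code n C \<longleftrightarrow> C \<subseteq> F2vecs n \<and> vzero n \<in> C \<and>
     (\<forall>x\<in>C. \<forall>y\<in>C. vadd x y \<in> C) \<and> (\<forall>c::bit. \<forall>x\<in>C. map ((*) c) x \<in> C)"

definition euclidean_dual :: "nat \<Rightarrow> bit list set \<Rightarrow> bit list set" where
  "euclidean_dual n C = {y \<in> F2vecs n. \<forall>x\<in>C. inner_E x y = 0}"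

definition min_distance :: "bit list set \<Rightarrow> nat" where
  "min_distance C = Min {hamming_weight x | x. x \<in> C \<and> (\<exists>a\<in>set x. a \<noteq> 0)}"

text \<open>A binary [n,k,d] code: a k-dimensional subspace of F_2^n (over F_2, dimension k
  means exactly 2^k elements) with minimum nonzero weight d.\<close>
definition binary_code_params :: "nat \<Rightarrow> nat \<Rightarrow> nat \<Rightarrow> bit list set \<Rightarrow> bool" where
  "binary_code_params n k d C \<longleftrightarrow> binary_linear_code n C \<and> card C = 2 ^ k \<and>
     min_distance C = d"

definition euclidean_LCD :: "nat \<Rightarrow> bit list set \<Rightarrow> bool" where
  "euclidean_LCD n C \<longleftrightarrow> C \<inter> euclidean_dual n C = {vzero n}"

end

theory Submission
  imports Defs
begin


fun combacc :: "bool list \<Rightarrow> bit list list \<Rightarrow> bit list \<Rightarrow> bit list" where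
  "combacc (b#bs) (r#rs) acc = combacc bs rs (if b then vadd r acc else acc)"
| "combacc _ _ acc = acc"

definition spancode :: "nat \<Rightarrow> bit list list \<Rightarrow> bit list set" where
  "spancode n R = {combacc bs R (vzero n) | bs. length bs = length R}"

fun atl :: "nat \<Rightarrow> bit list \<Rightarrow> bool" where
  "atl 0 xs = True"
| "atl (Suc d) [] = False"
| "atl (Suc d) (x#xs) = (if x = 0 then atl (Suc d) xs else atl d xs)"

fun nzl :: "bit list \<Rightarrow> bool" where
  "nzl [] = False"
| "nzl (x#xs) = (if x = 0 then nzl xs else True)"

fun vaddp :: "bit list \<times> bit list \<Rightarrow> bit list \<times> bit list \<Rightarrow> bit list \<times> bit list" where
  "vaddp (a,b) (c,e) = (vadd a c, vadd b e)"

fun chk :: "nat \<Rightarrow> (bit list \<times> bit list) list \<Rightarrow> bit list \<times> bit list \<Rightarrow> bool \<Rightarrow> bool" where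
  "chk d [] (c,s) nz = (if nz then atl d c \<and> nzl s else True)"
| "chk d (r#rs) acc nz = (chk d rs acc nz \<and> chk d rs (vaddp r acc) True)"

fun combaccp :: "bool list \<Rightarrow> (bit list \<times> bit list) list \<Rightarrow> bit list \<times> bit list \<Rightarrow> bit list \<times> bit list" where
  "combaccp (b#bs) (r#rs) acc = combaccp bs rs (if b then vaddp r acc else acc)"
| "combaccp _ _ acc = acc"

lemma bit_cases2: "(x::bit) = 0 \<or> x = 1"
  by (metis bit_not_zero_iff)

lemma bit_self_add[simp]: "(x::bit) + x = 0"
  using bit_cases2[of x] by auto

lemma atl_iff: "atl d xs \<longleftrightarrow> d \<le> hamming_weight xs"
  by (induction d xs rule: atl.induct) (auto simp: hamming_weight_def)

lemma nzl_iff: "nzl xs \<longleftrightarrow> (\<exists>x\<in>set xs. x \<noteq> 0)"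
  by (induction xs) auto

lemma chk_sound:
  "chk d rs acc nz \<Longrightarrow> length bs = length rs \<Longrightarrow> nz \<or> True \<in> set bs \<Longrightarrow>
     (case combaccp bs rs acc of (c,s) \<Rightarrow> atl d c \<and> nzl s)"
proof (induction d rs acc nz arbitrary: bs rule: chk.induct)
  case (1 d c s nz)
  then show ?case by auto
next
  case (2 d r rs acc nz)
  then obtain b bs' where bs: "bs = b # bs'" by (cases bs) auto
  show ?case
  proof (cases b)
    case True
    then show ?thesis using 2 bs by auto
  next
    case False
    then show ?thesis using 2 bs by auto
  qed
qed

lemma combaccp_split:
  "length bs = length rs \<Longrightarrow> combaccp bs rs (a,b) = (combacc bs (map fst rs) a, combacc bs (map snd rs) b)"
proof (induction bs arbitrary: rs a b)
  case Nil
  then show ?case by auto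
next
  case (Cons x bs)
  then obtain r rs' where "rs = r # rs'" by (cases rs) auto
  then show ?case using Cons by (cases r) auto
qed

lemma length_vadd[simp]: "length (vadd x y) = min (length x) (length y)"
  by (simp add: vadd_def)

lemma nth_vadd[simp]: "i < length x \<Longrightarrow> i < length y \<Longrightarrow> vadd x y ! i = x ! i + y ! i"
  by (simp add: vadd_def)

lemma length_combacc:
  "length a = n \<Longrightarrow> \<forall>r\<in>set rs. length r = n \<Longrightarrow> length (combacc bs rs a) = n"
  by (induction bs rs a rule: combacc.induct) auto

lemma combacc_nil: "True \<notin> set bs \<Longrightarrow> combacc bs rs a = a"
  by (induction bs rs a rule: combacc.induct) auto

lemma vadd_map_map: "vadd (map f R) (map g R) = map (\<lambda>x. f x + g x) R"
  by (induction R) (auto simp: vadd_def)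

lemma inner_vadd:
  assumes "length r = length x" "length x = length y"
  shows "inner_E r (vadd x y) = inner_E r x + inner_E r y"
proof -
  have "r ! i * vadd x y ! i = r ! i * x ! i + r ! i * y ! i" if "i < length r" for i
  proof -
    have "i < length x" "i < length y" using that assms by auto
    then show ?thesis by (simp only: nth_vadd distrib_left)
  qed
  then have "inner_E r (vadd x y) = (\<Sum>i<length r. r ! i * x ! i + r ! i * y ! i)"
    unfolding inner_E_def using assms by (intro sum.cong) auto
  also have "\<dots> = inner_E r x + inner_E r y"
    unfolding inner_E_def using assms by (simp only: sum.distrib)
  finally show ?thesis .
qed

lemma inner_vzero[simp]: "length r = n \<Longrightarrow> inner_E r (vzero n) = 0"
  by (simp add: inner_E_def vzero_def)

lemma syndrome:
  assumes "\<forall>r\<in>set R. length r = n" "\<forall>r\<in>set rs. length r = n" "length a = n"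
  shows "combacc bs (map (\<lambda>r. map (\<lambda>r'. inner_E r' r) R) rs) (map (\<lambda>r'. inner_E r' a) R)
      = map (\<lambda>r'. inner_E r' (combacc bs rs a)) R"
  using assms
proof (induction bs rs a rule: combacc.induct)
  case (1 b bs r rs acc)
  have "vadd (map (\<lambda>r'. inner_E r' r) R) (map (\<lambda>r'. inner_E r' acc) R) = map (\<lambda>r'. inner_E r' (vadd r acc)) R"
    unfolding vadd_map_map using 1(2-) by (auto simp: inner_vadd)
  moreover have "length (vadd r acc) = n" using 1(2-) by auto
  ultimately show ?case using 1 by auto
qed auto

lemma vadd_assoc: "vadd (vadd x y) z = vadd x (vadd y z)"
  by (rule nth_equalityI) (auto simp: add.assoc)

lemma vadd_comm: "vadd x y = vadd y x"
  by (rule nth_equalityI) (auto simp: add.commute)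

lemma vadd_cancel: "length x = length y \<Longrightarrow> vadd x (vadd x y) = y"
  by (rule nth_equalityI) (auto simp: add.assoc[symmetric])

lemma vadd_lcomm: "vadd a (vadd r c) = vadd r (vadd a c)"
  by (rule nth_equalityI) (auto simp: add.left_commute)

lemma vadd_rr: "length r = length a \<Longrightarrow> length a = length c \<Longrightarrow> vadd r (vadd a (vadd r c)) = vadd a c"
  by (rule nth_equalityI) (auto simp: add.left_commute add.assoc[symmetric])

lemma combacc_add:
  assumes "length b1 = length rs" "length b2 = length rs" "\<forall>r\<in>set rs. length r = n"
    "length a = n" "length c = n"
  shows "vadd (combacc b1 rs a) (combacc b2 rs c) = combacc (map2 (\<noteq>) b1 b2) rs (vadd a c)"
  using assms
proof (induction rs arbitrary: b1 b2 a c)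
  case Nil
  then show ?case by auto
next
  case (Cons r rs)
  then obtain x1 bs1 x2 bs2 where b: "b1 = x1 # bs1" "b2 = x2 # bs2"
    by (cases b1; cases b2) auto
  show ?case using Cons b
    by (cases x1; cases x2) (auto simp: vadd_assoc vadd_lcomm vadd_rr vadd_cancel)
qed


lemma row_in: "r \<in> set rs \<Longrightarrow> \<exists>bs. length bs = length rs \<and> combacc bs rs a = vadd r a"
proof (induction rs arbitrary: a)
  case Nil
  then show ?case by simp
next
  case (Cons r0 rs)
  show ?case
  proof (cases "r = r0")
    case True
    then have "combacc (True # replicate (length rs) False) (r0 # rs) a = vadd r a"
      by (simp add: combacc_nil)
    then show ?thesis by (metis length_Cons length_replicate)
  next
    case False
    then have "r \<in> set rs" using Cons.prems by simp
    then obtain bs where "length bs = length rs" "combacc bs rs a = vadd r a" using Cons.IH by blast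
    then have "length (False # bs) = length (r0 # rs) \<and> combacc (False # bs) (r0 # rs) a = vadd r a" by simp
    then show ?thesis by blast
  qed
qed

lemma vadd_vzero: "length r = n \<Longrightarrow> vadd r (vzero n) = r"
  by (rule nth_equalityI) (auto simp: vzero_def)

lemma vzero_vzero: "vadd (vzero n) (vzero n) = vzero n"
  by (rule nth_equalityI) (auto simp: vzero_def)

lemma hw_vzero: "hamming_weight (vzero n) = 0"
  by (simp add: hamming_weight_def vzero_def)

theorem code_main:
  assumes lens: "\<forall>r\<in>set R. length r = n"
    and S: "S = map (\<lambda>r. map (\<lambda>r'. inner_E r' r) R) R"
    and ck: "chk d (zip R S) (vzero n, vzero (length R)) False"
    and d1: "1 \<le> d"
    and wl: "length w = length R" and ww: "hamming_weight (combacc w R (vzero n)) = d"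
  shows "binary_code_params n (length R) d (spancode n R) \<and> euclidean_LCD n (spancode n R)"
proof -
  define k where "k = length R"
  let ?x = "\<lambda>bs. combacc bs R (vzero n)"
  have lenx: "length (?x bs) = n" for bs
    using length_combacc[OF _ lens] by (simp add: vzero_def)
  have F: "d \<le> hamming_weight (?x bs) \<and> (\<exists>r\<in>set R. inner_E r (?x bs) \<noteq> 0)"
    if "length bs = k" "True \<in> set bs" for bs
  proof -
    have lS: "length S = k" using S k_def by simp
    have "case combaccp bs (zip R S) (vzero n, vzero k) of (c,s) \<Rightarrow> atl d c \<and> nzl s"
      using chk_sound[OF ck[folded k_def], of bs] that lS k_def by simp
    moreover have "combaccp bs (zip R S) (vzero n, vzero k) = (?x bs, combacc bs S (vzero k))"
      using combaccp_split[of bs "zip R S"] that lS k_def by simp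
    moreover have "vzero k = map (\<lambda>r'. inner_E r' (vzero n)) R"
    proof -
      have "map (\<lambda>r'. inner_E r' (vzero n)) R = map (\<lambda>_. 0) R" using lens by (intro map_cong) auto
      then show ?thesis by (simp add: vzero_def k_def map_replicate_const)
    qed
    moreover have "combacc bs S (map (\<lambda>r'. inner_E r' (vzero n)) R) = map (\<lambda>r'. inner_E r' (?x bs)) R"
      unfolding S by (rule syndrome[OF lens lens]) (simp add: vzero_def)
    ultimately have "atl d (?x bs) \<and> nzl (map (\<lambda>r'. inner_E r' (?x bs)) R)" by simp
    then show ?thesis by (auto simp: atl_iff nzl_iff)
  qed
  have zero_in: "vzero n \<in> spancode n R"
    unfolding spancode_def
    by (rule CollectI, rule exI[of _ "replicate (length R) False"]) (simp add: combacc_nil)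
  have nonzero_bs: "True \<in> set bs" if "?x bs \<noteq> vzero n" for bs
    using that combacc_nil by blast
  have lin: "binary_linear_code n (spancode n R)"
    unfolding binary_linear_code_def
  proof (intro conjI ballI allI)
    show "spancode n R \<subseteq> F2vecs n" using lenx by (auto simp: spancode_def F2vecs_def)
    show "vzero n \<in> spancode n R" by (fact zero_in)
  next
    fix x y assume "x \<in> spancode n R" "y \<in> spancode n R"
    then obtain b1 b2 where b: "length b1 = length R" "x = ?x b1" "length b2 = length R" "y = ?x b2"
      by (auto simp: spancode_def)
    then have "vadd x y = ?x (map2 (\<noteq>) b1 b2)"
      using combacc_add[OF b(1) b(3) lens, of "vzero n" "vzero n"] vzero_vzero
      by (simp add: vzero_def)
    moreover have "length (map2 (\<noteq>) b1 b2) = length R" using b by simp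
    ultimately show "vadd x y \<in> spancode n R" unfolding spancode_def by blast
  next
    fix c :: bit and x assume x: "x \<in> spancode n R"
    then have lx: "length x = n" using lenx by (auto simp: spancode_def)
    show "map ((*) c) x \<in> spancode n R"
    proof (cases "c = 0")
      case True
      then have "map ((*) c) x = map (\<lambda>_. 0) x" by (intro map_cong) simp_all
      then have "map ((*) c) x = vzero n" using lx by (simp only: vzero_def map_replicate_const)
      then show ?thesis using zero_in by simp
    next
      case False
      then have "c = 1" using bit_cases2 by blast
      then have "map ((*) c) x = map id x" by (intro map_cong) simp_all
      then show ?thesis using x by simp
    qed
  qed
  have inj: "inj_on ?x {bs. length bs = k}"
  proof (rule inj_onI)
    fix b1 b2 assume b: "b1 \<in> {bs. length bs = k}" "b2 \<in> {bs. length bs = k}" and eq: "?x b1 = ?x b2"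
    show "b1 = b2"
    proof (rule ccontr)
      assume ne: "b1 \<noteq> b2"
      have l: "length b1 = length R" "length b2 = length R" using b k_def by auto
      have "?x (map2 (\<noteq>) b1 b2) = vadd (?x b1) (?x b2)"
        using combacc_add[OF l lens, of "vzero n" "vzero n"] vzero_vzero
        by (simp add: vzero_def)
      also have "\<dots> = vzero n" using eq lenx
        by (intro nth_equalityI) (auto simp: vzero_def)
      finally have z: "?x (map2 (\<noteq>) b1 b2) = vzero n" .
      have "True \<in> set (map2 (\<noteq>) b1 b2)"
      proof -
        obtain i where "i < length b1" "b1 ! i \<noteq> b2 ! i" using ne l nth_equalityI[of b1 b2] by auto
        moreover have "map2 (\<noteq>) b1 b2 ! i = (b1 ! i \<noteq> b2 ! i)" using calculation l by simp
        moreover have "i < length (map2 (\<noteq>) b1 b2)" using calculation l by simp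
        ultimately show ?thesis by (metis nth_mem)
      qed
      then have "d \<le> hamming_weight (vzero n)" using F[of "map2 (\<noteq>) b1 b2"] z l k_def by simp
      then show False using d1 hw_vzero by simp
    qed
  qed
  have codeim: "spancode n R = ?x ` {bs. length bs = k}" unfolding spancode_def k_def by blast
  have card: "card (spancode n R) = 2 ^ k"
  proof -
    have "card (spancode n R) = card {bs :: bool list. length bs = k}"
      using codeim card_image[OF inj] by simp
    also have "\<dots> = 2 ^ k"
      using card_lists_length_eq[of "UNIV :: bool set" k] by simp
    finally show ?thesis .
  qed
  have "finite {bs::bool list. length bs = k}" using finite_lists_length_eq[of "UNIV::bool set" k] by simp
  then have fin: "finite (spancode n R)" using codeim by simp
  have md: "min_distance (spancode n R) = d"
    unfolding min_distance_def
  proof (rule Min_eqI)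
    show "finite {hamming_weight x |x. x \<in> spancode n R \<and> (\<exists>a\<in>set x. a \<noteq> 0)}"
      using fin by simp
  next
    fix y assume "y \<in> {hamming_weight x |x. x \<in> spancode n R \<and> (\<exists>a\<in>set x. a \<noteq> 0)}"
    then obtain bs where bs: "length bs = k" "y = hamming_weight (?x bs)" "\<exists>a\<in>set (?x bs). a \<noteq> 0"
      by (auto simp: spancode_def k_def)
    then have "?x bs \<noteq> vzero n" by (auto simp: vzero_def)
    then show "d \<le> y" using F[of bs] nonzero_bs bs by blast
  next
    have "?x w \<in> spancode n R" using wl unfolding spancode_def by blast
    moreover have "\<exists>a\<in>set (?x w). a \<noteq> 0"
    proof (rule ccontr)
      assume "\<not> (\<exists>a\<in>set (?x w). a \<noteq> 0)"
      then have "filter (\<lambda>a. a \<noteq> 0) (?x w) = []" by (simp only: filter_empty_conv) blast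
      then show False using ww d1 by (simp only: hamming_weight_def) simp
    qed
    ultimately show "d \<in> {hamming_weight x |x. x \<in> spancode n R \<and> (\<exists>a\<in>set x. a \<noteq> 0)}"
      using ww by force
  qed
  have lcd: "euclidean_LCD n (spancode n R)"
    unfolding euclidean_LCD_def
  proof
    show "spancode n R \<inter> euclidean_dual n (spancode n R) \<subseteq> {vzero n}"
    proof
      fix x assume x: "x \<in> spancode n R \<inter> euclidean_dual n (spancode n R)"
      then obtain bs where bs: "length bs = k" "x = ?x bs" by (auto simp: spancode_def k_def)
      show "x \<in> {vzero n}"
      proof (rule ccontr)
        assume "x \<notin> {vzero n}"
        then have "True \<in> set bs" using nonzero_bs bs by auto
        then obtain r where r: "r \<in> set R" "inner_E r x \<noteq> 0" using F[OF bs(1)] bs by auto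
        obtain cs where "length cs = length R" "combacc cs R (vzero n) = vadd r (vzero n)"
          using row_in[OF r(1)] by blast
        then have "r \<in> spancode n R" using vadd_vzero lens r(1) unfolding spancode_def by auto
        then show False using x r by (auto simp: euclidean_dual_def)
      qed
    qed
  next
    show "{vzero n} \<subseteq> spancode n R \<inter> euclidean_dual n (spancode n R)"
    proof -
      have "\<forall>x\<in>spancode n R. inner_E x (vzero n) = 0" using lenx inner_vzero by (auto simp: spancode_def)
      moreover have "vzero n \<in> F2vecs n" by (simp add: F2vecs_def vzero_def)
      ultimately show ?thesis using zero_in by (auto simp: euclidean_dual_def)
    qed
  qed
  show ?thesis using lin card md lcd k_def by (simp add: binary_code_params_def)
qed


lemma inner_Cons: "inner_E (a#x) (b#y) = a*b + inner_E x y"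
  unfolding inner_E_def by (simp only: length_Cons sum.lessThan_Suc_shift nth_Cons_0 nth_Cons_Suc)

lemma inner_Nil: "inner_E [] y = 0"
  by (simp add: inner_E_def)

lemmas ip_simps = inner_Cons inner_Nil

lemma bit_arith: "(0::bit) * x = 0" "(1::bit) * x = x" "(0::bit) + x = x" "x + (0::bit) = x" "(1::bit) + 1 = 0"
  by simp_all

lemma vadd_Cons: "vadd (a#x) (b#y) = (a+b) # vadd x y" and vadd_Nil: "vadd [] [] = []"
  by (simp_all add: vadd_def)

lemmas chk_simps = chk.simps vaddp.simps vadd_Cons vadd_Nil atl.simps nzl.simps bit_arith
  if_True if_False simp_thms one_neq_zero


lemma hw_Cons: "hamming_weight (x#xs) = (if x = 0 then hamming_weight xs else Suc (hamming_weight xs))"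
  and hw_Nil: "hamming_weight [] = 0"
  by (simp_all add: hamming_weight_def)



definition RB :: "bit list list" where
  "RB = [[0,0,0,0,0,0,0,0,0,0,1,1,1,1,1,0,1,0,1,1,1,0,1,0,0,0,0,1,1,0], [0,0,0,0,0,0,0,0,0,1,0,1,1,1,0,1,0,1,1,1,0,1,0,0,0,0,0,1,1,0], [0,0,0,0,0,0,0,0,1,0,0,1,1,0,1,0,1,1,1,0,1,1,0,0,0,0,1,1,0,1], [0,0,0,0,0,0,0,1,0,0,0,1,0,1,0,1,1,1,0,1,1,1,0,0,0,1,1,0,0,0], [0,0,0,0,0,0,1,0,0,0,0,0,1,0,1,1,1,0,1,1,1,1,0,0,1,1,1,0,1,0], [0,0,0,0,0,1,0,0,0,0,0,1,0,1,1,1,0,1,1,1,1,0,0,1,1,1,0,1,0,0], [0,0,0,0,1,0,0,0,0,0,0,0,1,1,1,0,1,1,1,1,0,1,1,1,1,0,0,0,0,0], [0,0,0,1,0,0,0,0,0,0,0,1,1,1,0,1,1,1,1,0,1,0,1,1,0,0,1,0,0,0], [0,0,1,0,0,0,0,0,0,0,0,1,1,0,1,1,1,1,0,1,0,1,1,0,0,1,0,0,0,1], [0,1,0,0,0,0,0,0,0,0,0,1,0,1,1,1,1,0,1,0,1,1,0,0,1,0,0,0,0,1], [1,0,0,0,0,0,0,0,0,0,0,0,1,1,1,1,0,1,0,1,1,1,0,1,0,0,0,0,1,1]]"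

lemma RB_pairs: "zip RB (map (\<lambda>r. map (\<lambda>r'. inner_E r' r) RB) RB) =
  [([0,0,0,0,0,0,0,0,0,0,1,1,1,1,1,0,1,0,1,1,1,0,1,0,0,0,0,1,1,0], [0,1,1,1,1,1,1,1,0,0,0]), ([0,0,0,0,0,0,0,0,0,1,0,1,1,1,0,1,0,1,1,1,0,1,0,0,0,0,0,1,1,0], [1,1,0,0,0,1,0,0,0,1,1]), ([0,0,0,0,0,0,0,0,1,0,0,1,1,0,1,0,1,1,1,0,1,1,0,0,0,0,1,1,0,1], [1,0,0,0,1,0,0,1,1,1,0]), ([0,0,0,0,0,0,0,1,0,0,0,1,0,1,0,1,1,1,0,1,1,1,0,0,0,1,1,0,0,0], [1,0,0,1,1,1,1,1,1,0,0]), ([0,0,0,0,0,0,1,0,0,0,0,0,1,0,1,1,1,0,1,1,1,1,0,0,1,1,1,0,1,0], [1,0,1,1,1,1,1,0,1,1,1]), ([0,0,0,0,0,1,0,0,0,0,0,1,0,1,1,1,0,1,1,1,1,0,0,1,1,1,0,1,0,0], [1,1,0,1,1,1,1,1,0,1,1]), ([0,0,0,0,1,0,0,0,0,0,0,0,1,1,1,0,1,1,1,1,0,1,1,1,1,0,0,0,0,0], [1,0,0,1,1,1,0,1,1,0,1]), ([0,0,0,1,0,0,0,0,0,0,0,1,1,1,0,1,1,1,1,0,1,0,1,1,0,0,1,0,0,0], [1,0,1,1,0,1,1,0,0,0,0]), ([0,0,1,0,0,0,0,0,0,0,0,1,1,0,1,1,1,1,0,1,0,1,1,0,0,1,0,0,0,1],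 [0,0,1,1,1,0,1,0,0,0,1]), ([0,1,0,0,0,0,0,0,0,0,0,1,0,1,1,1,1,0,1,0,1,1,0,0,1,0,0,0,0,1], [0,1,1,0,1,1,0,0,0,1,0]), ([1,0,0,0,0,0,0,0,0,0,0,0,1,1,1,1,0,1,0,1,1,1,0,1,0,0,0,0,1,1], [0,1,0,0,1,1,1,0,1,0,0])]"
  unfolding RB_def by (simp only: list.map ip_simps zip_Cons_Cons zip_Nil bit_arith)

lemma RB_chk: "chk (Suc(Suc(Suc(Suc(Suc(Suc(Suc(Suc(Suc(0)))))))))) [([0,0,0,0,0,0,0,0,0,0,1,1,1,1,1,0,1,0,1,1,1,0,1,0,0,0,0,1,1,0], [0,1,1,1,1,1,1,1,0,0,0]), ([0,0,0,0,0,0,0,0,0,1,0,1,1,1,0,1,0,1,1,1,0,1,0,0,0,0,0,1,1,0], [1,1,0,0,0,1,0,0,0,1,1]), ([0,0,0,0,0,0,0,0,1,0,0,1,1,0,1,0,1,1,1,0,1,1,0,0,0,0,1,1,0,1], [1,0,0,0,1,0,0,1,1,1,0]), ([0,0,0,0,0,0,0,1,0,0,0,1,0,1,0,1,1,1,0,1,1,1,0,0,0,1,1,0,0,0], [1,0,0,1,1,1,1,1,1,0,0]), ([0,0,0,0,0,0,1,0,0,0,0,0,1,0,1,1,1,0,1,1,1,1,0,0,1,1,1,0,1,0], [1,0,1,1,1,1,1,0,1,1,1]), ([0,0,0,0,0,1,0,0,0,0,0,1,0,1,1,1,0,1,1,1,1,0,0,1,1,1,0,1,0,0], [1,1,0,1,1,1,1,1,0,1,1]),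 ([0,0,0,0,1,0,0,0,0,0,0,0,1,1,1,0,1,1,1,1,0,1,1,1,1,0,0,0,0,0], [1,0,0,1,1,1,0,1,1,0,1]), ([0,0,0,1,0,0,0,0,0,0,0,1,1,1,0,1,1,1,1,0,1,0,1,1,0,0,1,0,0,0], [1,0,1,1,0,1,1,0,0,0,0]), ([0,0,1,0,0,0,0,0,0,0,0,1,1,0,1,1,1,1,0,1,0,1,1,0,0,1,0,0,0,1], [0,0,1,1,1,0,1,0,0,0,1]), ([0,1,0,0,0,0,0,0,0,0,0,1,0,1,1,1,1,0,1,0,1,1,0,0,1,0,0,0,0,1], [0,1,1,0,1,1,0,0,0,1,0]), ([1,0,0,0,0,0,0,0,0,0,0,0,1,1,1,1,0,1,0,1,1,1,0,1,0,0,0,0,1,1], [0,1,0,0,1,1,1,0,1,0,0])] ([0,0,0,0,0,0,0,0,0,0,0,0,0,0,0,0,0,0,0,0,0,0,0,0,0,0,0,0,0,0], [0,0,0,0,0,0,0,0,0,0,0]) False"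
  by (simp only: chk_simps cong: if_weak_cong)

lemma RB_main: "binary_code_params 30 11 9 (spancode 30 RB) \<and> euclidean_LCD 30 (spancode 30 RB)"
proof -
  have "binary_code_params 30 (length RB) 9 (spancode 30 RB) \<and> euclidean_LCD 30 (spancode 30 RB)"
  proof (rule code_main[OF _ refl])
    show "\<forall>r\<in>set RB. length r = 30" by (simp add: RB_def)
    have v: "vzero 30 = [0,0,0,0,0,0,0,0,0,0,0,0,0,0,0,0,0,0,0,0,0,0,0,0,0,0,0,0,0,0]" "vzero (length RB) = [0,0,0,0,0,0,0,0,0,0,0]"
      by (simp_all add: vzero_def RB_def numeral_eq_Suc)
    have e: "(9::nat) = Suc(Suc(Suc(Suc(Suc(Suc(Suc(Suc(Suc(0)))))))))" by simp
    show "chk 9 (zip RB (map (\<lambda>r. map (\<lambda>r'. inner_E r' r) RB) RB)) (vzero 30, vzero (length RB)) False"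
      unfolding RB_pairs v e by (rule RB_chk)
    show "1 \<le> (9::nat)" by simp
    show "length [True,True,False,False,False,False,False,False,False,False,False] = length RB" by (simp add: RB_def)
    show "hamming_weight (combacc [True,True,False,False,False,False,False,False,False,False,False] RB (vzero 30)) = 9"
      unfolding v(1) RB_def e by (simp only: combacc.simps chk_simps hw_Cons hw_Nil cong: if_weak_cong)
  qed
  moreover have l: "length RB = 11" by (simp add: RB_def)
  ultimately show ?thesis by (simp only: l)
qed



definition RA :: "bit list list" where
  "RA = [[0,0,0,0,0,0,0,0,0,0,0,0,0,0,1,0,0,1,0,0,0,0,0,0,1,1,1,1,1,1], [0,0,0,0,0,0,0,0,0,0,0,0,0,1,0,0,1,0,0,0,0,1,0,1,1,1,1,1,1,0], [0,0,0,0,0,0,0,0,0,0,0,0,1,0,0,1,0,0,0,0,1,0,1,1,1,1,1,1,0,0], [0,0,0,0,0,0,0,0,0,0,0,1,0,0,0,0,0,0,0,1,0,0,1,1,1,1,1,0,0,1], [0,0,0,0,0,0,0,0,0,0,1,0,0,0,0,0,0,0,1,0,0,1,1,1,1,1,0,0,1,0], [0,0,0,0,0,0,0,0,0,1,0,0,0,0,0,0,0,1,0,0,1,1,1,1,1,0,0,1,0,0], [0,0,0,0,0,0,0,0,1,0,0,0,0,0,0,0,1,0,0,1,1,1,1,1,0,0,1,0,0,0], [0,0,0,0,0,0,0,1,0,0,0,0,0,0,0,1,0,0,1,1,1,1,1,0,0,1,0,0,0,0], [0,0,0,0,0,0,1,0,0,0,0,0,0,0,0,0,0,1,1,1,1,1,0,0,1,0,0,0,0,1],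 [0,0,0,0,0,1,0,0,0,0,0,0,0,0,0,0,1,1,1,1,1,1,0,1,0,0,0,0,1,0], [0,0,0,0,1,0,0,0,0,0,0,0,0,0,0,1,1,1,1,1,1,0,1,0,0,0,0,1,0,0], [0,0,0,1,0,0,0,0,0,0,0,0,0,0,0,1,1,1,1,1,0,0,0,0,0,0,1,0,0,1], [0,0,1,0,0,0,0,0,0,0,0,0,0,0,0,1,1,1,1,0,0,1,0,0,0,1,0,0,1,1], [0,1,0,0,0,0,0,0,0,0,0,0,0,0,0,1,1,1,0,0,1,0,0,0,1,0,0,1,1,1], [1,0,0,0,0,0,0,0,0,0,0,0,0,0,0,1,1,0,0,1,0,0,0,1,0,0,1,1,1,1]]"

lemma RA_pairs: "zip RA (map (\<lambda>r. map (\<lambda>r'. inner_E r' r) RA) RA) =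
  [([0,0,0,0,0,0,0,0,0,0,0,0,0,0,1,0,0,1,0,0,0,0,0,0,1,1,1,1,1,1], [0,1,0,0,1,1,1,1,1,0,0,1,0,1,0]), ([0,0,0,0,0,0,0,0,0,0,0,0,0,1,0,0,1,0,0,0,0,1,0,1,1,1,1,1,1,0], [1,1,1,0,1,0,0,0,0,0,0,0,0,0,1]), ([0,0,0,0,0,0,0,0,0,0,0,0,1,0,0,1,0,0,0,0,1,0,1,1,1,1,1,1,0,0], [0,1,1,1,0,1,0,0,0,0,0,0,0,0,0]), ([0,0,0,0,0,0,0,0,0,0,0,1,0,0,0,0,0,0,0,1,0,0,1,1,1,1,1,0,0,1], [0,0,1,0,0,1,0,1,1,0,0,1,0,0,0]), ([0,0,0,0,0,0,0,0,0,0,1,0,0,0,0,0,0,0,1,0,0,1,1,1,1,1,0,0,1,0], [1,1,0,0,0,0,1,0,1,0,0,1,0,0,0]), ([0,0,0,0,0,0,0,0,0,1,0,0,0,0,0,0,0,1,0,0,1,1,1,1,1,0,0,1,0,0], [1,0,1,1,0,0,0,1,0,0,0,1,0,0,0]), ([0,0,0,0,0,0,0,0,1,0,0,0,0,0,0,0,1,0,0,1,1,1,1,1,0,0,1,0,0,0], [1,0,0,0,1,0,0,0,1,1,0,1,0,0,0]), ([0,0,0,0,0,0,0,1,0,0,0,0,0,0,0,1,0,0,1,1,1,1,1,0,0,1,0,0,0,0], [1,0,0,1,0,1,0,0,0,0,1,1,0,0,0]), ([0,0,0,0,0,0,1,0,0,0,0,0,0,0,0,0,0,1,1,1,1,1,0,0,1,0,0,0,0,1],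 [1,0,0,1,1,0,1,0,0,1,0,0,0,0,0]), ([0,0,0,0,0,1,0,0,0,0,0,0,0,0,0,0,1,1,1,1,1,1,0,1,0,0,0,0,1,0], [0,0,0,0,0,0,1,0,1,1,1,0,1,0,0]), ([0,0,0,0,1,0,0,0,0,0,0,0,0,0,0,1,1,1,1,1,1,0,1,0,0,0,0,1,0,0], [0,0,0,0,0,0,0,1,0,1,1,1,0,1,0]), ([0,0,0,1,0,0,0,0,0,0,0,0,0,0,0,1,1,1,1,1,0,0,0,0,0,0,1,0,0,1], [1,0,0,1,1,1,1,1,0,0,1,0,1,0,1]), ([0,0,1,0,0,0,0,0,0,0,0,0,0,0,0,1,1,1,1,0,0,1,0,0,0,1,0,0,1,1], [0,0,0,0,0,0,0,0,0,1,0,1,1,1,0]), ([0,1,0,0,0,0,0,0,0,0,0,0,0,0,0,1,1,1,0,0,1,0,0,0,1,0,0,1,1,1], [1,0,0,0,0,0,0,0,0,0,1,0,1,1,1]), ([1,0,0,0,0,0,0,0,0,0,0,0,0,0,0,1,1,0,0,1,0,0,0,1,0,0,1,1,1,1], [0,1,0,0,0,0,0,0,0,0,0,1,0,1,1])]"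
  unfolding RA_def by (simp only: list.map ip_simps zip_Cons_Cons zip_Nil bit_arith)

lemma RA_chk: "chk (Suc(Suc(Suc(Suc(Suc(Suc(Suc(0)))))))) [([0,0,0,0,0,0,0,0,0,0,0,0,0,0,1,0,0,1,0,0,0,0,0,0,1,1,1,1,1,1], [0,1,0,0,1,1,1,1,1,0,0,1,0,1,0]), ([0,0,0,0,0,0,0,0,0,0,0,0,0,1,0,0,1,0,0,0,0,1,0,1,1,1,1,1,1,0], [1,1,1,0,1,0,0,0,0,0,0,0,0,0,1]), ([0,0,0,0,0,0,0,0,0,0,0,0,1,0,0,1,0,0,0,0,1,0,1,1,1,1,1,1,0,0], [0,1,1,1,0,1,0,0,0,0,0,0,0,0,0]), ([0,0,0,0,0,0,0,0,0,0,0,1,0,0,0,0,0,0,0,1,0,0,1,1,1,1,1,0,0,1], [0,0,1,0,0,1,0,1,1,0,0,1,0,0,0]), ([0,0,0,0,0,0,0,0,0,0,1,0,0,0,0,0,0,0,1,0,0,1,1,1,1,1,0,0,1,0], [1,1,0,0,0,0,1,0,1,0,0,1,0,0,0]), ([0,0,0,0,0,0,0,0,0,1,0,0,0,0,0,0,0,1,0,0,1,1,1,1,1,0,0,1,0,0], [1,0,1,1,0,0,0,1,0,0,0,1,0,0,0]), ([0,0,0,0,0,0,0,0,1,0,0,0,0,0,0,0,1,0,0,1,1,1,1,1,0,0,1,0,0,0], [1,0,0,0,1,0,0,0,1,1,0,1,0,0,0]), ([0,0,0,0,0,0,0,1,0,0,0,0,0,0,0,1,0,0,1,1,1,1,1,0,0,1,0,0,0,0],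 [1,0,0,1,0,1,0,0,0,0,1,1,0,0,0]), ([0,0,0,0,0,0,1,0,0,0,0,0,0,0,0,0,0,1,1,1,1,1,0,0,1,0,0,0,0,1], [1,0,0,1,1,0,1,0,0,1,0,0,0,0,0]), ([0,0,0,0,0,1,0,0,0,0,0,0,0,0,0,0,1,1,1,1,1,1,0,1,0,0,0,0,1,0], [0,0,0,0,0,0,1,0,1,1,1,0,1,0,0]), ([0,0,0,0,1,0,0,0,0,0,0,0,0,0,0,1,1,1,1,1,1,0,1,0,0,0,0,1,0,0], [0,0,0,0,0,0,0,1,0,1,1,1,0,1,0]), ([0,0,0,1,0,0,0,0,0,0,0,0,0,0,0,1,1,1,1,1,0,0,0,0,0,0,1,0,0,1], [1,0,0,1,1,1,1,1,0,0,1,0,1,0,1]), ([0,0,1,0,0,0,0,0,0,0,0,0,0,0,0,1,1,1,1,0,0,1,0,0,0,1,0,0,1,1], [0,0,0,0,0,0,0,0,0,1,0,1,1,1,0]), ([0,1,0,0,0,0,0,0,0,0,0,0,0,0,0,1,1,1,0,0,1,0,0,0,1,0,0,1,1,1], [1,0,0,0,0,0,0,0,0,0,1,0,1,1,1]), ([1,0,0,0,0,0,0,0,0,0,0,0,0,0,0,1,1,0,0,1,0,0,0,1,0,0,1,1,1,1], [0,1,0,0,0,0,0,0,0,0,0,1,0,1,1])] ([0,0,0,0,0,0,0,0,0,0,0,0,0,0,0,0,0,0,0,0,0,0,0,0,0,0,0,0,0,0], [0,0,0,0,0,0,0,0,0,0,0,0,0,0,0]) False"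
  by (simp only: chk_simps cong: if_weak_cong)

lemma RA_main: "binary_code_params 30 15 7 (spancode 30 RA) \<and> euclidean_LCD 30 (spancode 30 RA)"
proof -
  have "binary_code_params 30 (length RA) 7 (spancode 30 RA) \<and> euclidean_LCD 30 (spancode 30 RA)"
  proof (rule code_main[OF _ refl])
    show "\<forall>r\<in>set RA. length r = 30" by (simp add: RA_def)
    have v: "vzero 30 = [0,0,0,0,0,0,0,0,0,0,0,0,0,0,0,0,0,0,0,0,0,0,0,0,0,0,0,0,0,0]" "vzero (length RA) = [0,0,0,0,0,0,0,0,0,0,0,0,0,0,0]"
      by (simp_all add: vzero_def RA_def numeral_eq_Suc)
    have e: "(7::nat) = Suc(Suc(Suc(Suc(Suc(Suc(Suc(0)))))))" by simp
    show "chk 7 (zip RA (map (\<lambda>r. map (\<lambda>r'. inner_E r' r) RA) RA)) (vzero 30, vzero (length RA)) False"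
      unfolding RA_pairs v e by (rule RA_chk)
    show "1 \<le> (7::nat)" by simp
    show "length [True,True,False,False,False,False,False,False,False,False,False,False,False,False,False] = length RA" by (simp add: RA_def)
    show "hamming_weight (combacc [True,True,False,False,False,False,False,False,False,False,False,False,False,False,False] RA (vzero 30)) = 7"
      unfolding v(1) RA_def e by (simp only: combacc.simps chk_simps hw_Cons hw_Nil cong: if_weak_cong)
  qed
  moreover have l: "length RA = 15" by (simp add: RA_def)
  ultimately show ?thesis by (simp only: l)
qed



definition RC :: "bit list list" where
  "RC = [[0,0,0,0,0,0,0,0,0,0,1,0,1,0,0,1,1,1,1,0,1,1,1,1,1,0,1,0,1,0,1,1,0], [0,0,0,0,0,0,0,0,0,1,0,1,0,0,1,1,1,1,0,1,1,0,1,1,0,1,0,1,0,1,1,0,1], [0,0,0,0,0,0,0,0,1,0,0,0,0,1,1,1,1,0,1,1,0,1,1,0,1,0,1,0,1,1,0,1,1], [0,0,0,0,0,0,0,1,0,0,0,0,1,1,1,1,0,1,1,0,1,0,0,1,0,1,0,1,1,0,1,1,1], [0,0,0,0,0,0,1,0,0,0,0,1,1,1,1,0,1,1,0,1,0,0,1,0,1,0,1,1,0,1,1,1,0], [0,0,0,0,0,1,0,0,0,0,0,1,1,1,0,1,1,0,1,0,0,1,0,1,0,1,1,0,1,1,1,0,1], [0,0,0,0,1,0,0,0,0,0,0,1,1,0,1,1,0,1,0,0,1,1,1,0,1,1,0,1,1,1,0,1,0], [0,0,0,1,0,0,0,0,0,0,0,1,0,1,1,0,1,0,0,1,1,1,0,1,1,0,1,1,1,0,1,0,1],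 [0,0,1,0,0,0,0,0,0,0,0,0,1,1,0,1,0,0,1,1,1,1,1,1,0,1,1,1,0,1,0,1,0], [0,1,0,0,0,0,0,0,0,0,0,1,1,0,1,0,0,1,1,1,1,0,1,0,1,1,1,0,1,0,1,0,1], [1,0,0,0,0,0,0,0,0,0,0,1,0,1,0,0,1,1,1,1,0,1,0,1,1,1,0,1,0,1,0,1,1]]"

lemma RC_pairs: "zip RC (map (\<lambda>r. map (\<lambda>r'. inner_E r' r) RC) RC) =
  [([0,0,0,0,0,0,0,0,0,0,1,0,1,0,0,1,1,1,1,0,1,1,1,1,1,0,1,0,1,0,1,1,0], [1,1,1,1,0,1,1,0,1,1,1]), ([0,0,0,0,0,0,0,0,0,1,0,1,0,0,1,1,1,1,0,1,1,0,1,1,0,1,0,1,0,1,1,0,1], [1,1,1,1,1,0,1,1,0,1,1]), ([0,0,0,0,0,0,0,0,1,0,0,0,0,1,1,1,1,0,1,1,0,1,1,0,1,0,1,0,1,1,0,1,1], [1,1,1,1,1,1,0,1,1,0,1]), ([0,0,0,0,0,0,0,1,0,0,0,0,1,1,1,1,0,1,1,0,1,0,0,1,0,1,0,1,1,0,1,1,1], [1,1,1,1,1,1,1,0,1,1,0]), ([0,0,0,0,0,0,1,0,0,0,0,1,1,1,1,0,1,1,0,1,0,0,1,0,1,0,1,1,0,1,1,1,0], [0,1,1,1,1,1,1,1,0,1,1]), ([0,0,0,0,0,1,0,0,0,0,0,1,1,1,0,1,1,0,1,0,0,1,0,1,0,1,1,0,1,1,1,0,1], [1,0,1,1,1,1,1,1,1,0,1]),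 ([0,0,0,0,1,0,0,0,0,0,0,1,1,0,1,1,0,1,0,0,1,1,1,0,1,1,0,1,1,1,0,1,0], [1,1,0,1,1,1,1,1,1,1,0]), ([0,0,0,1,0,0,0,0,0,0,0,1,0,1,1,0,1,0,0,1,1,1,0,1,1,0,1,1,1,0,1,0,1], [0,1,1,0,1,1,1,1,1,1,1]), ([0,0,1,0,0,0,0,0,0,0,0,0,1,1,0,1,0,0,1,1,1,1,1,1,0,1,1,1,0,1,0,1,0], [1,0,1,1,0,1,1,1,1,1,1]), ([0,1,0,0,0,0,0,0,0,0,0,1,1,0,1,0,0,1,1,1,1,0,1,0,1,1,1,0,1,0,1,0,1], [1,1,0,1,1,0,1,1,1,1,1]), ([1,0,0,0,0,0,0,0,0,0,0,1,0,1,0,0,1,1,1,1,0,1,0,1,1,1,0,1,0,1,0,1,1], [1,1,1,0,1,1,0,1,1,1,1])]"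
  unfolding RC_def by (simp only: list.map ip_simps zip_Cons_Cons zip_Nil bit_arith)

lemma RC_chk: "chk (Suc(Suc(Suc(Suc(Suc(Suc(Suc(Suc(Suc(Suc(Suc(0)))))))))))) [([0,0,0,0,0,0,0,0,0,0,1,0,1,0,0,1,1,1,1,0,1,1,1,1,1,0,1,0,1,0,1,1,0], [1,1,1,1,0,1,1,0,1,1,1]), ([0,0,0,0,0,0,0,0,0,1,0,1,0,0,1,1,1,1,0,1,1,0,1,1,0,1,0,1,0,1,1,0,1], [1,1,1,1,1,0,1,1,0,1,1]), ([0,0,0,0,0,0,0,0,1,0,0,0,0,1,1,1,1,0,1,1,0,1,1,0,1,0,1,0,1,1,0,1,1], [1,1,1,1,1,1,0,1,1,0,1]), ([0,0,0,0,0,0,0,1,0,0,0,0,1,1,1,1,0,1,1,0,1,0,0,1,0,1,0,1,1,0,1,1,1], [1,1,1,1,1,1,1,0,1,1,0]), ([0,0,0,0,0,0,1,0,0,0,0,1,1,1,1,0,1,1,0,1,0,0,1,0,1,0,1,1,0,1,1,1,0], [0,1,1,1,1,1,1,1,0,1,1]), ([0,0,0,0,0,1,0,0,0,0,0,1,1,1,0,1,1,0,1,0,0,1,0,1,0,1,1,0,1,1,1,0,1], [1,0,1,1,1,1,1,1,1,0,1]), ([0,0,0,0,1,0,0,0,0,0,0,1,1,0,1,1,0,1,0,0,1,1,1,0,1,1,0,1,1,1,0,1,0], [1,1,0,1,1,1,1,1,1,1,0]), ([0,0,0,1,0,0,0,0,0,0,0,1,0,1,1,0,1,0,0,1,1,1,0,1,1,0,1,1,1,0,1,0,1],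 [0,1,1,0,1,1,1,1,1,1,1]), ([0,0,1,0,0,0,0,0,0,0,0,0,1,1,0,1,0,0,1,1,1,1,1,1,0,1,1,1,0,1,0,1,0], [1,0,1,1,0,1,1,1,1,1,1]), ([0,1,0,0,0,0,0,0,0,0,0,1,1,0,1,0,0,1,1,1,1,0,1,0,1,1,1,0,1,0,1,0,1], [1,1,0,1,1,0,1,1,1,1,1]), ([1,0,0,0,0,0,0,0,0,0,0,1,0,1,0,0,1,1,1,1,0,1,0,1,1,1,0,1,0,1,0,1,1], [1,1,1,0,1,1,0,1,1,1,1])] ([0,0,0,0,0,0,0,0,0,0,0,0,0,0,0,0,0,0,0,0,0,0,0,0,0,0,0,0,0,0,0,0,0], [0,0,0,0,0,0,0,0,0,0,0]) False"
  by (simp only: chk_simps cong: if_weak_cong)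

lemma RC_main: "binary_code_params 33 11 11 (spancode 33 RC) \<and> euclidean_LCD 33 (spancode 33 RC)"
proof -
  have "binary_code_params 33 (length RC) 11 (spancode 33 RC) \<and> euclidean_LCD 33 (spancode 33 RC)"
  proof (rule code_main[OF _ refl])
    show "\<forall>r\<in>set RC. length r = 33" by (simp add: RC_def)
    have v: "vzero 33 = [0,0,0,0,0,0,0,0,0,0,0,0,0,0,0,0,0,0,0,0,0,0,0,0,0,0,0,0,0,0,0,0,0]" "vzero (length RC) = [0,0,0,0,0,0,0,0,0,0,0]"
      by (simp_all add: vzero_def RC_def numeral_eq_Suc)
    have e: "(11::nat) = Suc(Suc(Suc(Suc(Suc(Suc(Suc(Suc(Suc(Suc(Suc(0)))))))))))" by simp
    show "chk 11 (zip RC (map (\<lambda>r. map (\<lambda>r'. inner_E r' r) RC) RC)) (vzero 33, vzero (length RC)) False"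
      unfolding RC_pairs v e by (rule RC_chk)
    show "1 \<le> (11::nat)" by simp
    show "length [True,True,True,False,False,False,False,False,False,False,False] = length RC" by (simp add: RC_def)
    show "hamming_weight (combacc [True,True,True,False,False,False,False,False,False,False,False] RC (vzero 33)) = 11"
      unfolding v(1) RC_def e by (simp only: combacc.simps chk_simps hw_Cons hw_Nil cong: if_weak_cong)
  qed
  moreover have l: "length RC = 11" by (simp add: RC_def)
  ultimately show ?thesis by (simp only: l)
qed


theorem proposition4p6:
  shows "(\<exists>C. binary_code_params 30 11 9 C \<and> euclidean_LCD 30 C) \<and>
         (\<exists>C. binary_code_params 30 15 7 C \<and> euclidean_LCD 30 C) \<and>
         (\<exists>C. binary_code_params 33 11 11 C \<and> euclidean_LCD 33 C)"
  using RB_main RA_main RC_main by blast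

end
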